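(* Let $A_1,A_2\subset\mathcal{M}$ be sets of copies of $G_0$, let $\hat A_2:=\bigcup_{\Gamma\in A_2}\mathcal{M}_\Gamma$, and let $F$ be a non-negative functional of $\{B_\Gamma\}_{\Gamma\in A_2}$, so that $F$ is independent of $\{B_\Gamma\}_{\Gamma\in\mathcal{M}\setminus\hat A_2}$. Then for all $t\ge0$, $$\mathbb{E}\Big[F\,e^{\frac t\sigma\sum_{\Gamma\in\mathcal{M}\setminus A_1}B_\Gamma^c}\Big]\le\mathbb{E}[F]\,e^{\frac t\sigma|A_1\cup\hat A_2|}\,\mathbb{E}[e^{tW}],$$ and in particular $$\mathbb{E}\Big[e^{\frac t\sigma\sum_{\Gamma\in\mathcal{M}\setminus A_1}B_\Gamma^c}\Big]\le e^{\frac t\sigma|A_1|}\,\mathbb{E}[e^{tW}].$$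
   Context: $G_0$ is a graph with at least one edge and no isolated vertices. $E$ is the set of edges of $K_n$; $(B_k)_{k\in E}$ are independent Bernoulli($p$), $p\in(0,1)$; $B_A=\prod_{k\in A}B_k$, $Z^c=Z-\mathbb{E}Z$. $\mathcal{M}$ is the set of all $\Gamma\subset E$ whose spanned graph is isomorphic to $G_0$; for $\Gamma\in\mathcal{M}$, $\mathcal{M}_\Gamma=\{\Gamma'\in\mathcal{M}:\Gamma'\cap\Gamma\neq\emptyset\}$. $\sigma^2=\operatorname{Var}(\sum_{\Gamma\in\mathcal{M}}B_\Gamma)$ and $W=\frac1\sigma\sum_{\Gamma\in\mathcal{M}}B_\Gamma^c$. *)

theory Defs
  imports "HOL-Probability.Probability"
begin

definition edges_K :: "nat \<Rightarrow> nat set set" where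
  "edges_K n = {e. \<exists>i<n. \<exists>j<n. i \<noteq> j \<and> e = {i, j}}"

text \<open>G_0 (no isolated vertices) is represented by its edge set E0; its vertex set is the union
  of its edges. Gamma is a copy of G_0 if the graph spanned by Gamma is isomorphic to G_0.\<close>
definition is_copy :: "'v set set \<Rightarrow> nat set set \<Rightarrow> bool" where
  "is_copy E0 \<Gamma> = (\<exists>f. bij_betw f (\<Union>E0) (\<Union>\<Gamma>) \<and> (\<lambda>e. f ` e) ` E0 = \<Gamma>)"

definition copies :: "nat \<Rightarrow> 'v set set \<Rightarrow> nat set set set" where
  "copies n E0 = {\<Gamma>. \<Gamma> \<subseteq> edges_K n \<and> is_copy E0 \<Gamma>}"

definition nbhd :: "nat \<Rightarrow> 'v set set \<Rightarrow> nat set set \<Rightarrow> nat set set set" where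
  "nbhd n E0 \<Gamma> = {\<Gamma>' \<in> copies n E0. \<Gamma>' \<inter> \<Gamma> \<noteq> {}}"

definition edge_space :: "nat \<Rightarrow> real \<Rightarrow> (nat set \<Rightarrow> bool) pmf" where
  "edge_space n p = Pi_pmf (edges_K n) False (\<lambda>_. bernoulli_pmf p)"

definition BG :: "nat set set \<Rightarrow> (nat set \<Rightarrow> bool) \<Rightarrow> real" where
  "BG \<Gamma> \<omega> = (\<Prod>k\<in>\<Gamma>. of_bool (\<omega> k))"

definition Ex :: "nat \<Rightarrow> real \<Rightarrow> ((nat set \<Rightarrow> bool) \<Rightarrow> real) \<Rightarrow> real" where
  "Ex n p f = measure_pmf.expectation (edge_space n p) f"

definition Bc :: "nat \<Rightarrow> real \<Rightarrow> nat set set \<Rightarrow> (nat set \<Rightarrow> bool) \<Rightarrow> real" where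
  "Bc n p \<Gamma> \<omega> = BG \<Gamma> \<omega> - Ex n p (BG \<Gamma>)"

definition sigma :: "nat \<Rightarrow> real \<Rightarrow> 'v set set \<Rightarrow> real" where
  "sigma n p E0 = sqrt (measure_pmf.variance (edge_space n p) (\<lambda>\<omega>. \<Sum>\<Gamma>\<in>copies n E0. BG \<Gamma> \<omega>))"

definition W :: "nat \<Rightarrow> real \<Rightarrow> 'v set set \<Rightarrow> (nat set \<Rightarrow> bool) \<Rightarrow> real" where
  "W n p E0 \<omega> = (1 / sigma n p E0) * (\<Sum>\<Gamma>\<in>copies n E0. Bc n p \<Gamma> \<omega>)"

end

theory Submission
  imports Defs
begin

lemma fin_Pi_bool: "finite A \<Longrightarrow> finite (set_pmf (Pi_pmf A (d::bool) q))"
proof -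
  assume A: "finite A"
  have "{f. \<forall>x. x \<notin> A \<longrightarrow> f x = d} = PiE_dflt A d (\<lambda>_. UNIV)"
    by (auto simp: PiE_dflt_def)
  moreover have "finite (PiE_dflt A d (\<lambda>_. UNIV :: bool set))" using A by (intro finite_PiE_dflt) auto
  ultimately show ?thesis using set_Pi_pmf_subset[OF A, of d q] by (metis finite_subset)
qed

lemma pair_expect_mult:
  fixes f :: "'a \<Rightarrow> real" and g :: "'b \<Rightarrow> real"
  assumes "finite (set_pmf P)" "finite (set_pmf Q)"
  shows "measure_pmf.expectation (pair_pmf P Q) (\<lambda>x. f (fst x) * g (snd x))
     = measure_pmf.expectation P f * measure_pmf.expectation Q g"
proof -
  have "measure_pmf.expectation (pair_pmf P Q) (\<lambda>x. f (fst x) * g (snd x))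
     = (\<Sum>x\<in>set_pmf P \<times> set_pmf Q. f (fst x) * g (snd x) * pmf (pair_pmf P Q) x)"
    using assms by (intro integral_measure_pmf_real) auto
  also have "\<dots> = (\<Sum>(a,b)\<in>set_pmf P \<times> set_pmf Q. (f a * pmf P a) * (g b * pmf Q b))"
    by (intro sum.cong) (auto simp: pmf_pair mult_ac)
  also have "\<dots> = (\<Sum>a\<in>set_pmf P. \<Sum>b\<in>set_pmf Q. (f a * pmf P a) * (g b * pmf Q b))"
    by (simp add: sum.cartesian_product)
  also have "\<dots> = (\<Sum>a\<in>set_pmf P. f a * pmf P a) * (\<Sum>b\<in>set_pmf Q. g b * pmf Q b)"
    by (simp add: sum_product)
  also have "\<dots> = measure_pmf.expectation P f * measure_pmf.expectation Q g"
    using assms by (simp add: integral_measure_pmf_real[of "set_pmf P"] integral_measure_pmf_real[of "set_pmf Q"])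
  finally show ?thesis .
qed

lemma indep_Pi:
  fixes f g :: "('a \<Rightarrow> bool) \<Rightarrow> real"
  assumes fin: "finite A" "finite B" and dis: "A \<inter> B = {}"
    and fA: "\<And>\<omega> \<omega>'. (\<forall>x\<in>A. \<omega> x = \<omega>' x) \<Longrightarrow> f \<omega> = f \<omega>'"
    and gB: "\<And>\<omega> \<omega>'. (\<forall>x\<in>B. \<omega> x = \<omega>' x) \<Longrightarrow> g \<omega> = g \<omega>'"
  shows "measure_pmf.expectation (Pi_pmf (A \<union> B) d q) (\<lambda>\<omega>. f \<omega> * g \<omega>)
     = measure_pmf.expectation (Pi_pmf (A \<union> B) d q) f * measure_pmf.expectation (Pi_pmf (A \<union> B) d q) g"
proof -
  define h where "h = (\<lambda>(u::'a\<Rightarrow>bool,v::'a\<Rightarrow>bool) x. if x \<in> A then u x else v x)"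
  have U: "Pi_pmf (A \<union> B) d q = map_pmf h (pair_pmf (Pi_pmf A d q) (Pi_pmf B d q))"
    unfolding h_def by (rule Pi_pmf_union[OF fin dis])
  have hf: "f (h x) = f (fst x)" for x
    by (rule fA) (auto simp: h_def split: prod.splits)
  have hg: "g (h x) = g (snd x)" for x
    by (rule gB) (use dis in \<open>auto simp: h_def split: prod.splits\<close>)
  show ?thesis unfolding U integral_map_pmf hf hg
    using fin by (simp add: pair_expect_mult fin_Pi_bool)
qed


lemma finite_edges_K: "finite (edges_K n)"
proof -
  have "edges_K n \<subseteq> (\<lambda>(i,j). {i,j}) ` ({..<n} \<times> {..<n})"
    by (auto simp: edges_K_def)
  thus ?thesis by (rule finite_subset) auto
qed

lemma finite_copies: "finite (copies n E0)"
  by (rule finite_subset[of _ "Pow (edges_K n)"]) (auto simp: copies_def finite_edges_K)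

lemma fin_es: "finite (set_pmf (edge_space n p))"
  unfolding edge_space_def by (rule fin_Pi_bool) (rule finite_edges_K)

lemma int_es: "integrable (measure_pmf (edge_space n p)) (f :: _ \<Rightarrow> real)"
  by (rule integrable_measure_pmf_finite[OF fin_es])

lemma BG_ge0: "0 \<le> BG \<Gamma> \<omega>" by (simp add: BG_def prod_nonneg)
lemma BG_le1: "BG \<Gamma> \<omega> \<le> 1" by (simp add: BG_def prod_le_1)

lemma Ex_BG_bounds: "0 \<le> Ex n p (BG \<Gamma>)" "Ex n p (BG \<Gamma>) \<le> 1"
proof -
  show "0 \<le> Ex n p (BG \<Gamma>)" unfolding Ex_def by (rule integral_nonneg_AE) (simp add: BG_ge0)
  have "Ex n p (BG \<Gamma>) \<le> Ex n p (\<lambda>_. 1)" unfolding Ex_def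
    by (rule integral_mono[OF int_es int_es]) (simp add: BG_le1)
  thus "Ex n p (BG \<Gamma>) \<le> 1" by (simp add: Ex_def)
qed

lemma Ex_mono: "(\<And>\<omega>. f \<omega> \<le> g \<omega>) \<Longrightarrow> Ex n p f \<le> Ex n p g"
  unfolding Ex_def by (rule integral_mono[OF int_es int_es])

lemma Ex_cmult: "Ex n p (\<lambda>\<omega>. f \<omega> * c) = Ex n p f * c"
  unfolding Ex_def by simp

lemma BG_local: "(\<forall>x\<in>\<Gamma>. \<omega> x = \<omega>' x) \<Longrightarrow> BG \<Gamma> \<omega> = BG \<Gamma> \<omega>'"
  unfolding BG_def by (intro prod.cong) auto

lemma part1:
  fixes n :: nat and p t :: real and E0 :: "'v set set"
    and A1 A2 :: "nat set set set" and \<phi> :: "(nat set set \<Rightarrow> real) \<Rightarrow> real"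
  assumes "A1 \<subseteq> copies n E0" "A2 \<subseteq> copies n E0"
    and phi: "\<forall>x. \<phi> x \<ge> 0"
    and "t \<ge> 0"
  shows "Ex n p (\<lambda>\<omega>. \<phi> (\<lambda>\<Gamma>\<in>A2. BG \<Gamma> \<omega>) *
            exp (t / sigma n p E0 * (\<Sum>\<Gamma>\<in>copies n E0 - A1. Bc n p \<Gamma> \<omega>)))
         \<le> Ex n p (\<lambda>\<omega>. \<phi> (\<lambda>\<Gamma>\<in>A2. BG \<Gamma> \<omega>))
           * exp (t / sigma n p E0 * real (card (A1 \<union> (\<Union>\<Gamma>\<in>A2. nbhd n E0 \<Gamma>))))
           * Ex n p (\<lambda>\<omega>. exp (t * W n p E0 \<omega>))"
proof -
  define S where "S = copies n E0"
  define a where "a = t / sigma n p E0"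
  have a0: "a \<ge> 0" unfolding a_def sigma_def using assms(4) by simp
  define m where "m = (\<lambda>\<Gamma>. Ex n p (BG \<Gamma>))"
  have m0: "0 \<le> m \<Gamma>" and m1: "m \<Gamma> \<le> 1" for \<Gamma> unfolding m_def using Ex_BG_bounds by auto
  have Bc_eq: "Bc n p \<Gamma> \<omega> = BG \<Gamma> \<omega> - m \<Gamma>" for \<Gamma> \<omega> by (simp add: Bc_def m_def)
  define N where "N = (\<Union>\<Gamma>\<in>A2. nbhd n E0 \<Gamma>)"
  define C where "C = A1 \<union> N"
  have finS: "finite S" unfolding S_def by (rule finite_copies)
  have CS: "C \<subseteq> S" unfolding C_def N_def S_def nbhd_def using assms(1) by auto
  have finC: "finite C" using CS finS by (rule finite_subset)
  define F where "F = (\<lambda>\<omega>. \<phi> (\<lambda>\<Gamma>\<in>A2. BG \<Gamma> \<omega>))"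
  have F0: "F \<omega> \<ge> 0" for \<omega> unfolding F_def using phi by auto
  define Y where "Y = (\<lambda>\<omega>. \<Sum>\<Gamma>\<in>S - C. Bc n p \<Gamma> \<omega>)"
  define K1 where "K1 = (\<Sum>\<Gamma>\<in>C - A1. 1 - m \<Gamma>)"
  define K2 where "K2 = (\<Sum>\<Gamma>\<in>C. m \<Gamma>)"
  have split1: "(\<Sum>\<Gamma>\<in>S - A1. Bc n p \<Gamma> \<omega>) = Y \<omega> + (\<Sum>\<Gamma>\<in>C - A1. Bc n p \<Gamma> \<omega>)" for \<omega>
  proof -
    have "S - A1 = (S - C) \<union> (C - A1)" using CS unfolding C_def by auto
    moreover have "(S - C) \<inter> (C - A1) = {}" by auto
    ultimately show ?thesis unfolding Y_def using finS finC by (simp add: sum.union_disjoint)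
  qed
  have b1: "(\<Sum>\<Gamma>\<in>S - A1. Bc n p \<Gamma> \<omega>) \<le> Y \<omega> + K1" for \<omega>
  proof -
    have "(\<Sum>\<Gamma>\<in>C - A1. Bc n p \<Gamma> \<omega>) \<le> K1" unfolding K1_def Bc_eq
      by (intro sum_mono) (simp add: BG_le1)
    thus ?thesis using split1 by simp
  qed
  have b2: "Y \<omega> - K2 \<le> (\<Sum>\<Gamma>\<in>S. Bc n p \<Gamma> \<omega>)" for \<omega>
  proof -
    have "S = (S - C) \<union> C" using CS by auto
    hence "(\<Sum>\<Gamma>\<in>S. Bc n p \<Gamma> \<omega>) = Y \<omega> + (\<Sum>\<Gamma>\<in>C. Bc n p \<Gamma> \<omega>)"
      unfolding Y_def using finS finC by (metis Diff_disjoint finite_Diff sum.union_disjoint Int_commute)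
    moreover have "- K2 \<le> (\<Sum>\<Gamma>\<in>C. Bc n p \<Gamma> \<omega>)" unfolding K2_def Bc_eq
      by (simp add: sum_negf sum_subtractf BG_ge0 sum_nonneg)
    ultimately show ?thesis by simp
  qed
  have b3: "K1 + K2 \<le> real (card C)"
  proof -
    have "K2 = (\<Sum>\<Gamma>\<in>C - A1. m \<Gamma>) + (\<Sum>\<Gamma>\<in>C \<inter> A1. m \<Gamma>)" unfolding K2_def
      using finC by (metis sum.Int_Diff add.commute)
    moreover have "(\<Sum>\<Gamma>\<in>C \<inter> A1. m \<Gamma>) \<le> real (card (C \<inter> A1))"
      using sum_mono[of "C \<inter> A1" m "\<lambda>_. 1"] m1 by simp
    moreover have "K1 = real (card (C - A1)) - (\<Sum>\<Gamma>\<in>C - A1. m \<Gamma>)" unfolding K1_def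
      by (simp add: sum_subtractf)
    moreover have "card C = card (C - A1) + card (C \<inter> A1)"
      using finC by (metis card_Int_Diff add.commute)
    ultimately show ?thesis by simp
  qed
  have tW: "t * W n p E0 \<omega> = a * (\<Sum>\<Gamma>\<in>S. Bc n p \<Gamma> \<omega>)" for \<omega>
    unfolding W_def a_def S_def by simp
  define D2 where "D2 = \<Union>A2"
  define K where "K = edges_K n"
  have D2K: "D2 \<subseteq> K" unfolding D2_def K_def using assms(2) by (auto simp: copies_def)
  have finK: "finite K" unfolding K_def by (rule finite_edges_K)
  have KU: "K = D2 \<union> (K - D2)" using D2K by auto
  have indep: "Ex n p (\<lambda>\<omega>. F \<omega> * exp (a * Y \<omega>)) = Ex n p F * Ex n p (\<lambda>\<omega>. exp (a * Y \<omega>))"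
    unfolding Ex_def edge_space_def K_def[symmetric]
    apply (subst (1 2 3) KU)
  proof (rule indep_Pi)
    show "finite D2" using D2K finK by (rule finite_subset)
    show "finite (K - D2)" using finK by simp
    show "D2 \<inter> (K - D2) = {}" by auto
    show "F \<omega> = F \<omega>'" if "\<forall>x\<in>D2. \<omega> x = \<omega>' x" for \<omega> \<omega>'
    proof -
      have "(\<lambda>\<Gamma>\<in>A2. BG \<Gamma> \<omega>) = (\<lambda>\<Gamma>\<in>A2. BG \<Gamma> \<omega>')"
        using that by (intro restrict_ext BG_local) (auto simp: D2_def)
      thus ?thesis unfolding F_def by simp
    qed
    show "exp (a * Y \<omega>) = exp (a * Y \<omega>')" if "\<forall>x\<in>K - D2. \<omega> x = \<omega>' x" for \<omega> \<omega>'
    proof -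
      have "Bc n p \<Gamma> \<omega> = Bc n p \<Gamma> \<omega>'" if G: "\<Gamma> \<in> S - C" for \<Gamma>
      proof -
        have GK: "\<Gamma> \<subseteq> K" using G unfolding S_def K_def copies_def by auto
        have "\<Gamma> \<inter> D2 = {}"
        proof (rule ccontr)
          assume "\<Gamma> \<inter> D2 \<noteq> {}"
          then obtain \<Gamma>2 where "\<Gamma>2 \<in> A2" "\<Gamma> \<inter> \<Gamma>2 \<noteq> {}" unfolding D2_def by auto
          hence "\<Gamma> \<in> N" using G unfolding N_def nbhd_def S_def by auto
          thus False using G unfolding C_def by auto
        qed
        hence "\<forall>x\<in>\<Gamma>. \<omega> x = \<omega>' x" using GK \<open>\<forall>x\<in>K - D2. \<omega> x = \<omega>' x\<close> by auto
        thus ?thesis unfolding Bc_eq using BG_local by metis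
      qed
      hence "Y \<omega> = Y \<omega>'" unfolding Y_def by (intro sum.cong) auto
      thus ?thesis by simp
    qed
  qed
  have "Ex n p (\<lambda>\<omega>. F \<omega> * exp (a * (\<Sum>\<Gamma>\<in>S - A1. Bc n p \<Gamma> \<omega>)))
      \<le> Ex n p (\<lambda>\<omega>. F \<omega> * exp (a * Y \<omega>) * exp (a * K1))"
  proof (rule Ex_mono)
    fix \<omega>
    have "exp (a * (\<Sum>\<Gamma>\<in>S - A1. Bc n p \<Gamma> \<omega>)) \<le> exp (a * Y \<omega> + a * K1)"
      using mult_left_mono[OF b1 a0] by (simp add: distrib_left)
    thus "F \<omega> * exp (a * (\<Sum>\<Gamma>\<in>S - A1. Bc n p \<Gamma> \<omega>)) \<le> F \<omega> * exp (a * Y \<omega>) * exp (a * K1)"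
      using F0 by (simp add: exp_add mult_left_mono mult.assoc)
  qed
  also have "\<dots> = Ex n p F * Ex n p (\<lambda>\<omega>. exp (a * Y \<omega>)) * exp (a * K1)"
    by (simp add: Ex_cmult indep)
  also have "Ex n p (\<lambda>\<omega>. exp (a * Y \<omega>)) \<le> Ex n p (\<lambda>\<omega>. exp (t * W n p E0 \<omega>) * exp (a * K2))"
  proof (rule Ex_mono)
    fix \<omega>
    have "a * Y \<omega> \<le> t * W n p E0 \<omega> + a * K2"
      unfolding tW using mult_left_mono[OF b2[of \<omega>] a0] by (simp add: right_diff_distrib)
    thus "exp (a * Y \<omega>) \<le> exp (t * W n p E0 \<omega>) * exp (a * K2)" by (simp add: exp_add[symmetric])
  qed
  hence "Ex n p F * Ex n p (\<lambda>\<omega>. exp (a * Y \<omega>)) * exp (a * K1)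
      \<le> Ex n p F * (Ex n p (\<lambda>\<omega>. exp (t * W n p E0 \<omega>)) * exp (a * K2)) * exp (a * K1)"
  proof -
    assume h: "Ex n p (\<lambda>\<omega>. exp (a * Y \<omega>)) \<le> Ex n p (\<lambda>\<omega>. exp (t * W n p E0 \<omega>) * exp (a * K2))"
    have EF: "Ex n p F \<ge> 0" unfolding Ex_def by (rule integral_nonneg_AE) (simp add: F0)
    show ?thesis using h EF by (simp add: Ex_cmult) (intro mult_right_mono mult_left_mono, auto)
  qed
  also have "\<dots> = Ex n p F * exp (a * (K1 + K2)) * Ex n p (\<lambda>\<omega>. exp (t * W n p E0 \<omega>))"
    by (simp add: distrib_left exp_add mult_ac)
  also have "\<dots> \<le> Ex n p F * exp (a * real (card C)) * Ex n p (\<lambda>\<omega>. exp (t * W n p E0 \<omega>))"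
  proof -
    have EF: "Ex n p F \<ge> 0" unfolding Ex_def by (rule integral_nonneg_AE) (simp add: F0)
    have EW: "Ex n p (\<lambda>\<omega>. exp (t * W n p E0 \<omega>)) \<ge> 0" unfolding Ex_def by (rule integral_nonneg_AE) simp
    have "exp (a * (K1 + K2)) \<le> exp (a * real (card C))" using mult_left_mono[OF b3 a0] by simp
    thus ?thesis using EF EW by (intro mult_right_mono mult_left_mono) auto
  qed
  finally show ?thesis unfolding F_def a_def S_def C_def N_def .
qed

theorem lemma5p6:
  fixes n :: nat and p t :: real and E0 :: "'v set set"
    and A1 A2 :: "nat set set set" and \<phi> :: "(nat set set \<Rightarrow> real) \<Rightarrow> real"
  assumes "0 < p" "p < 1"
    and "finite E0" "E0 \<noteq> {}" "\<forall>e\<in>E0. card e = 2"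
    and "A1 \<subseteq> copies n E0" "A2 \<subseteq> copies n E0"
    and "\<forall>x. \<phi> x \<ge> 0"
    and "t \<ge> 0"
  shows "Ex n p (\<lambda>\<omega>. \<phi> (\<lambda>\<Gamma>\<in>A2. BG \<Gamma> \<omega>) *
            exp (t / sigma n p E0 * (\<Sum>\<Gamma>\<in>copies n E0 - A1. Bc n p \<Gamma> \<omega>)))
         \<le> Ex n p (\<lambda>\<omega>. \<phi> (\<lambda>\<Gamma>\<in>A2. BG \<Gamma> \<omega>))
           * exp (t / sigma n p E0 * real (card (A1 \<union> (\<Union>\<Gamma>\<in>A2. nbhd n E0 \<Gamma>))))
           * Ex n p (\<lambda>\<omega>. exp (t * W n p E0 \<omega>))
       \<and> Ex n p (\<lambda>\<omega>. exp (t / sigma n p E0 * (\<Sum>\<Gamma>\<in>copies n E0 - A1. Bc n p \<Gamma> \<omega>)))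
         \<le> exp (t / sigma n p E0 * real (card A1)) * Ex n p (\<lambda>\<omega>. exp (t * W n p E0 \<omega>))"
proof -
  have P2: "Ex n p (\<lambda>\<omega>. (\<lambda>_. 1::real) (\<lambda>\<Gamma>\<in>{}. BG \<Gamma> \<omega>) *
            exp (t / sigma n p E0 * (\<Sum>\<Gamma>\<in>copies n E0 - A1. Bc n p \<Gamma> \<omega>)))
         \<le> Ex n p (\<lambda>\<omega>. (\<lambda>_. 1::real) (\<lambda>\<Gamma>\<in>{}. BG \<Gamma> \<omega>))
           * exp (t / sigma n p E0 * real (card (A1 \<union> (\<Union>\<Gamma>\<in>{}. nbhd n E0 \<Gamma>))))
           * Ex n p (\<lambda>\<omega>. exp (t * W n p E0 \<omega>))"
    by (rule part1[OF assms(6)]) (use assms in auto)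
  have E1: "Ex n p (\<lambda>_. 1) = 1" by (simp add: Ex_def)
  show ?thesis using part1[OF assms(6,7,8,9)] P2 E1 by simp
qed

end
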